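(* Let $\tau_n:=\max\{k\ge1:U_{n-k}=k\}$ (the number of red balls in the urn right after the last black ball has been removed). Then $\tau_n$ has the same distribution as $\tau_n':=\max\{k\ge1:U_k=k\}$, and for $k\ge1$ \[ \mathbf P(\tau_n\ge k)=\frac{(n-k)(n-k-1)\cdots(n-2k+1)}{(n-1)(n-2)\cdots(n-k)}. \] Consequently, for every $t\ge0$, $\mathbf P(\tau_n/\sqrt n\ge t)\to e^{-t^2}$ as $n\to\infty$.
   Context: Urn process: let $n\ge2$. An urn initially contains $n$ black balls. It is emptied in $n$ steps: in each of the first $n-1$ steps a uniformly random pair of balls is removed from the urn and replaced by one red ball; in step $n$ the last remaining ball is removed. $U_k$ is the number of red balls in the urn after $k$ steps, $0\le k\le n$. *)

theory Defs
  imports "HOL-Probability.Probability"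
begin

text \<open>Urn state: (number of black balls, number of red balls).
  Balls are labelled 0,...,b+r-1; labels below b are black, the others red.\<close>

definition urn_step :: "nat \<times> nat \<Rightarrow> (nat \<times> nat) pmf" where
  "urn_step s = (case s of (b, r) \<Rightarrow>
     map_pmf (\<lambda>S. let nb = card (S \<inter> {..<b}) in (b - nb, r - (2 - nb) + 1))
       (pmf_of_set {S. S \<subseteq> {0..<b + r} \<and> card S = 2}))"

fun urn_traj :: "nat \<Rightarrow> nat \<times> nat \<Rightarrow> (nat \<times> nat) list pmf" where
  "urn_traj 0 s = return_pmf [s]"
| "urn_traj (Suc m) s = urn_step s \<bind> (\<lambda>s'. map_pmf (Cons s) (urn_traj m s'))"

text \<open>Law of the red-ball process (U_0,...,U_n): the first n-1 steps are pair
  replacements starting from n black balls; step n removes the last ball, so U_n = 0.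
  Values for indices beyond n are set to 0 (irrelevant).\<close>

definition urn :: "nat \<Rightarrow> (nat \<Rightarrow> nat) pmf" where
  "urn n = map_pmf (\<lambda>xs k. if k < n then snd (xs ! k) else 0) (urn_traj (n - 1) (n, 0))"

definition tau :: "nat \<Rightarrow> (nat \<Rightarrow> nat) \<Rightarrow> nat" where
  "tau n U = Max {k. 1 \<le> k \<and> k \<le> n \<and> U (n - k) = k}"

definition tau' :: "nat \<Rightarrow> (nat \<Rightarrow> nat) \<Rightarrow> nat" where
  "tau' n U = Max {k. 1 \<le> k \<and> k \<le> n \<and> U k = k}"

end

theory Submission
  imports Defs "HOL-Real_Asymp.Real_Asymp"
begin

definition rel :: "nat \<times> nat \<Rightarrow> nat \<times> nat \<Rightarrow> bool" where
  "rel s s' \<longleftrightarrow> (case s of (b, r) \<Rightarrow> (2 \<le> b \<and> s' = (b-2, r+1)) \<or> (1 \<le> b \<and> 1 \<le> r \<and> s' = (b-1, r))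
     \<or> (2 \<le> r \<and> s' = (b, r-1)))"

lemma omega_fin: "finite {S. S \<subseteq> {0..<(T::nat)} \<and> card S = 2}"
  by (rule finite_subset[of _ "Pow {0..<T}"]) auto

lemma omega_ne: "2 \<le> T \<Longrightarrow> {S. S \<subseteq> {0..<(T::nat)} \<and> card S = 2} \<noteq> {}"
proof -
  assume "2 \<le> T"
  hence "{0,1} \<in> {S. S \<subseteq> {0..<(T::nat)} \<and> card S = 2}" by auto
  thus ?thesis by blast
qed

lemma card_split: "finite S \<Longrightarrow> card S = card (S \<inter> A) + card (S - A)"
  by (metis Diff_Diff_Int Diff_subset card_Diff_subset card_mono finite_Diff le_add_diff_inverse2 inf_le1 Diff_disjoint)

lemma step_support:
  assumes "2 \<le> b + r" "s' \<in> set_pmf (urn_step (b,r))"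
  shows "rel (b,r) s'"
proof -
  from assms obtain S where S: "S \<subseteq> {0..<b+r}" "card S = 2"
    and s': "s' = (let nb = card (S \<inter> {..<b}) in (b - nb, r - (2 - nb) + 1))"
    unfolding urn_step_def using omega_fin omega_ne[of "b+r"] by auto
  define nb where "nb = card (S \<inter> {..<b})"
  have fin: "finite S" using S(2) card.infinite by fastforce
  have "nb \<le> 2" unfolding nb_def using S(2) fin by (metis card_mono inf_le1)
  moreover have "nb \<le> b" unfolding nb_def by (metis card_lessThan card_mono finite_lessThan inf_le2)
  moreover have "card (S - {..<b}) = 2 - nb" using card_split[OF fin, of "{..<b}"] S(2) nb_def by simp
  moreover have "card (S - {..<b}) \<le> r"
  proof -
    have "S - {..<b} \<subseteq> {b..<b+r}" using S(1) by auto
    thus ?thesis by (metis card_atLeastLessThan card_mono finite_atLeastLessThan add_diff_cancel_left')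
  qed
  ultimately have "nb = 0 \<and> 2 \<le> r \<or> nb = 1 \<and> 1 \<le> b \<and> 1 \<le> r \<or> nb = 2 \<and> 2 \<le> b" by auto
  thus ?thesis using s' unfolding rel_def nb_def[symmetric] Let_def by auto
qed

lemma choose2_add: "(b + r) choose 2 = (b choose 2) + b * r + (r choose 2)"
proof (induct r)
  case 0 then show ?case by simp
next
  case (Suc r)
  have "(b + Suc r) choose 2 = ((b + r) choose 2) + (b + r)"
    using binomial_Suc_Suc[of "b+r" 1] by (simp add: numeral_2_eq_2)
  moreover have "Suc r choose 2 = (r choose 2) + r"
    using binomial_Suc_Suc[of "r" 1] by (simp add: numeral_2_eq_2)
  ultimately show ?case using Suc by simp
qed

context
  fixes b r :: nat
begin

definition Om where "Om = {S. S \<subseteq> {0..<b+r} \<and> card S = 2}"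
definition Aj where "Aj j = {S \<in> Om. card (S \<inter> {..<b}) = j}"

lemma card_Om: "card Om = (b + r) choose 2"
  unfolding Om_def by (subst n_subsets) auto

lemma Om_fin: "S \<in> Om \<Longrightarrow> finite S"
  unfolding Om_def using card.infinite by fastforce

lemma A2_eq: "Aj 2 = {S. S \<subseteq> {..<b} \<and> card S = 2}"
proof -
  { fix S assume S: "S \<in> Om" "card (S \<inter> {..<b}) = 2"
    have fin: "finite S" using Om_fin S(1) .
    have "card S = 2" using S(1) unfolding Om_def by auto
    hence "S \<inter> {..<b} = S" using S(2) fin by (metis card_subset_eq inf_le1)
    hence "S \<subseteq> {..<b}" by blast }
  moreover
  { fix S assume S: "S \<subseteq> {..<b}" "card S = 2"
    hence "S \<in> Om" unfolding Om_def by auto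
    moreover have "S \<inter> {..<b} = S" using S by blast
    ultimately have "S \<in> Aj 2" unfolding Aj_def using S by auto }
  ultimately show ?thesis unfolding Aj_def Om_def by blast
qed

lemma A0_eq: "Aj 0 = {S. S \<subseteq> {b..<b+r} \<and> card S = 2}"
proof -
  { fix S assume S: "S \<in> Om" "card (S \<inter> {..<b}) = 0"
    have fin: "finite S" using Om_fin S(1) .
    hence "S \<inter> {..<b} = {}" using S(2) by simp
    hence "\<forall>x\<in>S. \<not> x < b" by auto
    hence "S \<subseteq> {b..<b+r} \<and> card S = 2" using S(1) unfolding Om_def by (force simp: not_less) }
  moreover
  { fix S assume S: "S \<subseteq> {b..<b+r}" "card S = 2"
    hence "S \<in> Om" unfolding Om_def by auto
    moreover have "S \<inter> {..<b} = {}" using S by auto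
    ultimately have "S \<in> Aj 0" unfolding Aj_def using S by auto }
  ultimately show ?thesis unfolding Aj_def Om_def by blast
qed

lemma card_A2: "card (Aj 2) = b choose 2"
  unfolding A2_eq by (subst n_subsets) auto

lemma card_A0: "card (Aj 0) = r choose 2"
  unfolding A0_eq by (subst n_subsets) auto

lemma Om_split: "Om = Aj 0 \<union> Aj 1 \<union> Aj 2"
proof -
  { fix S assume S: "S \<in> Om"
    have "card (S \<inter> {..<b}) \<le> 2" using S Om_fin[OF S] unfolding Om_def
      by (metis (mono_tags, lifting) card_mono inf_le1 mem_Collect_eq)
    moreover have aux: "\<And>c::nat. c \<le> 2 \<Longrightarrow> c \<in> {0,1,2}" by auto
    ultimately have c: "card (S \<inter> {..<b}) \<in> {0,1,2}" by blast
    have m: "S \<in> Aj (card (S \<inter> {..<b}))" unfolding Aj_def using S by simp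
    have sub: "\<And>j. j \<in> {0,1,2::nat} \<Longrightarrow> Aj j \<subseteq> Aj 0 \<union> Aj 1 \<union> Aj 2" by auto
    have "S \<in> Aj 0 \<union> Aj 1 \<union> Aj 2" using sub[OF c] m by (rule subsetD) }
  thus ?thesis unfolding Aj_def by blast
qed

lemma card_A1: "card (Aj 1) = b * r"
proof -
  have fin: "finite Om" unfolding Om_def using omega_fin .
  have fins: "finite (Aj j)" for j using fin unfolding Aj_def by auto
  have "card Om = card (Aj 0) + card (Aj 1) + card (Aj 2)"
  proof -
    have d1: "Aj 0 \<inter> Aj 1 = {}" "(Aj 0 \<union> Aj 1) \<inter> Aj 2 = {}" unfolding Aj_def by auto
    have "card Om = card (Aj 0 \<union> Aj 1) + card (Aj 2)"
      unfolding Om_split by (rule card_Un_disjoint) (use fins d1 in auto)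
    also have "card (Aj 0 \<union> Aj 1) = card (Aj 0) + card (Aj 1)"
      by (rule card_Un_disjoint) (use fins d1 in auto)
    finally show ?thesis .
  qed
  thus ?thesis using card_Om card_A0 card_A2 choose2_add[of b r] by simp
qed

lemma pmf_step_gen:
  assumes "2 \<le> b + r" "j \<le> 2" "j \<le> b" "2 - j \<le> r"
  shows "pmf (urn_step (b,r)) (b - j, r - (2 - j) + 1) = real (card (Aj j)) / real ((b + r) choose 2)"
proof -
  let ?f = "\<lambda>S. let nb = card (S \<inter> {..<b}) in (b - nb, r - (2 - nb) + 1)"
  have "urn_step (b,r) = map_pmf ?f (pmf_of_set Om)" unfolding urn_step_def Om_def by simp
  hence "pmf (urn_step (b,r)) (b - j, r - (2 - j) + 1) = card (Om \<inter> ?f -` {(b - j, r - (2 - j) + 1)}) / card Om"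
    using omega_fin omega_ne[OF assms(1)] unfolding Om_def
    by (simp add: pmf_map measure_pmf_of_set)
  moreover have "Om \<inter> ?f -` {(b - j, r - (2 - j) + 1)} = Aj j"
  proof -
    { fix S assume S: "S \<in> Om"
      define nb where "nb = card (S \<inter> {..<b})"
      have fin: "finite S" using Om_fin[OF S] .
      have c: "card S = 2" using S unfolding Om_def by auto
      have "nb \<le> 2" unfolding nb_def using c fin by (metis card_mono inf_le1)
      moreover have "nb \<le> b" unfolding nb_def by (metis card_lessThan card_mono finite_lessThan inf_le2)
      ultimately have "?f S = (b - j, r - (2 - j) + 1) \<longleftrightarrow> nb = j" using assms
        unfolding nb_def[symmetric] Let_def by auto
      hence "?f S = (b - j, r - (2 - j) + 1) \<longleftrightarrow> S \<in> Aj j" using S unfolding Aj_def nb_def by auto }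
    thus ?thesis unfolding Aj_def by auto
  qed
  ultimately show ?thesis using card_Om by simp
qed

end

lemma pmf_step2: "2 \<le> b \<Longrightarrow> pmf (urn_step (b,r)) (b-2, r+1) = real (b choose 2) / real ((b+r) choose 2)"
  using pmf_step_gen[of b r 2] card_A2[of b r] by simp

lemma pmf_step1: "1 \<le> b \<Longrightarrow> 1 \<le> r \<Longrightarrow> pmf (urn_step (b,r)) (b-1, r) = real (b * r) / real ((b+r) choose 2)"
  using pmf_step_gen[of b r 1] card_A1[of b r] by simp

lemma pmf_step0: assumes "2 \<le> r" shows "pmf (urn_step (b,r)) (b, r-1) = real (r choose 2) / real ((b+r) choose 2)"
proof -
  have "r - (2 - 0) + 1 = r - 1" using assms by simp
  thus ?thesis using pmf_step_gen[of b r 0] card_A0[of b r] assms by (simp del: One_nat_def)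
qed

lemma real_choose2: "real (n choose 2) = real n * (real n - 1) / 2"
proof (induct n)
  case 0 then show ?case by simp
next
  case (Suc n)
  have "Suc n choose 2 = (n choose 2) + n"
    using binomial_Suc_Suc[of n 1] by (simp add: numeral_2_eq_2)
  then show ?case using Suc by (simp add: field_simps)
qed

lemma ident:
  fixes b r1 m1 N :: nat
  defines "r \<equiv> Suc r1" and "m \<equiv> Suc m1" and "T \<equiv> Suc (b + Suc r1)"
  assumes N: "N = b + r + m"
  shows "(if 2 \<le> r then real (T choose (b+2)) * real (m1 choose (r - 2)) / real (N choose (b + r)) else 0)
           * (real ((b+2) choose 2) / real (T choose 2))
        + real (T choose (b+1)) * real (m1 choose r1) / real (N choose (b + r))
           * (real ((b+1) * r) / real (T choose 2))
        + real (T choose b) * real (m1 choose r) / real (N choose (b + r))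
           * (real (Suc r choose 2) / real (T choose 2))
        = real ((b + r) choose b) * real (m choose r1) / real (N choose (b + r1))"
proof -
  define X where "X = real ((b + r) choose b)"
  have ea: "real (T choose (b+2)) * real ((b+2) choose 2) = X * real T * real r / 2"
  proof -
    have 1: "Suc (Suc b) * (T choose Suc (Suc b)) = T * ((b + r) choose Suc b)"
      unfolding T_def r_def[symmetric] using Suc_times_binomial[of "Suc b" "b+r"] by simp
    have 2: "Suc b * (Suc (b + r1) choose Suc b) = Suc r1 * (Suc (b + r1) choose b)"
      by (rule Suc_times_binomial_add)
    have c2: "Suc b * ((b + r) choose Suc b) = r * ((b + r) choose b)"
      using 2 unfolding r_def by simp
    have c3: "real ((b+2) choose 2) = real (Suc (Suc b)) * real (Suc b) / 2"
      by (simp add: real_choose2)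
    have "real (T choose (b+2)) * real ((b+2) choose 2)
        = real (Suc (Suc b) * (T choose Suc (Suc b))) * real (Suc b) / 2"
      unfolding c3 by (simp add: field_simps)
    also have "\<dots> = real T * real (Suc b * ((b + r) choose Suc b)) / 2"
      using 1 by (simp add: field_simps)
    also have "\<dots> = X * real T * real r / 2" using c2 unfolding X_def
      by (metis (mono_tags, opaque_lifting) mult.commute mult.left_commute of_nat_mult)
    finally show ?thesis .
  qed
  have eb: "real (T choose (b+1)) * real ((b+1) * r) = X * real T * real r"
  proof -
    have "Suc b * (T choose Suc b) = T * ((b + r) choose b)"
      unfolding T_def r_def[symmetric] using Suc_times_binomial[of b "b+r"] by simp
    hence h: "real (Suc b) * real (T choose Suc b) = real T * X" unfolding X_def
      by (metis of_nat_mult)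
    have "real (T choose (b+1)) * real ((b+1) * r) = (real (Suc b) * real (T choose Suc b)) * real r"
      by (simp add: algebra_simps)
    also have "\<dots> = X * real T * real r" unfolding h by simp
    finally show ?thesis .
  qed
  have ec: "real (T choose b) * real (Suc r choose 2) = X * real T * real r / 2"
  proof -
    have 1: "Suc b * (T choose Suc b) = T * ((b + r) choose b)"
      unfolding T_def r_def[symmetric] using Suc_times_binomial[of b "b+r"] by simp
    have 2: "Suc b * (T choose Suc b) = Suc r * (T choose b)"
      unfolding T_def r_def[symmetric] using Suc_times_binomial_add[of b r] by simp
    have h: "real (Suc r) * real (T choose b) = real T * X" using 1 2 unfolding X_def
      by (metis of_nat_mult)
    have "real (T choose b) * real (Suc r choose 2) = (real (Suc r) * real (T choose b)) * real r / 2"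
      by (simp add: real_choose2 algebra_simps)
    also have "\<dots> = X * real T * real r / 2" unfolding h by simp
    finally show ?thesis .
  qed
  have ed: "(if 2 \<le> r then real (m1 choose (r - 2)) else 0) + 2 * real (m1 choose r1) + real (m1 choose r)
            = real (Suc m choose r)"
  proof (cases r1)
    case 0 then show ?thesis unfolding r_def m_def by simp
  next
    case (Suc r2)
    have "Suc (Suc m1) choose Suc (Suc r2) = (m1 choose r2) + 2 * (m1 choose Suc r2) + (m1 choose Suc (Suc r2))"
      by simp
    then show ?thesis unfolding r_def m_def Suc by (simp add: numeral_2_eq_2)
  qed
  have ee: "real r * real (Suc m choose r) = real (Suc m) * real (m choose r1)"
  proof -
    have "real (Suc r1 * (Suc m choose Suc r1)) = real (Suc m * (m choose r1))"
      using Suc_times_binomial[of r1 m] by (simp only:)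
    thus ?thesis unfolding r_def of_nat_mult .
  qed
  have ef: "real (N choose (b + r)) * real (b + r) = real (N choose (b + r1)) * real (Suc m)"
  proof -
    have "N = Suc (b + r1 + m)" unfolding N r_def by simp
    hence "Suc (b + r1) * (N choose Suc (b + r1)) = Suc m * (N choose (b + r1))"
      using Suc_times_binomial_add[of "b + r1" m] by simp
    hence "real (Suc (b + r1) * (N choose Suc (b + r1))) = real (Suc m * (N choose (b + r1)))"
      by (simp only:)
    hence "real (N choose Suc (b + r1)) * real (Suc (b + r1)) = real (N choose (b + r1)) * real (Suc m)"
      unfolding of_nat_mult by (simp only: mult.commute)
    thus ?thesis unfolding r_def by simp
  qed
  define D where "D = real (N choose (b + r))"
  define D' where "D' = real (N choose (b + r1))"
  have Dpos: "D > 0" unfolding D_def N by simp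
  have D'pos: "D' > 0" unfolding D'_def N r_def by simp
  have CT: "real (T choose 2) = real T * real (b + r) / 2" unfolding T_def r_def[symmetric] by (simp add: real_choose2)
  have Tpos: "real T > 0" unfolding T_def by simp
  have brpos: "real (b + r) > 0" unfolding r_def by simp
  define p where "p = (if 2 \<le> r then real (m1 choose (r - 2)) else 0)"
  define Y where "Y = X * real T * real r"
  define K where "K = real (T choose 2)"
  have Kpos: "K > 0" unfolding K_def T_def by simp
  have ifr: "(if 2 \<le> r then real (T choose (b+2)) * real (m1 choose (r - 2)) / D else 0)
      = real (T choose (b+2)) * p / D" unfolding p_def by simp
  have alg: "\<And>x1 x2 x3 x4 x5 x6 x7 x8 x9 x10 x11 :: real. x3 \<noteq> 0 \<Longrightarrow> x5 \<noteq> 0 \<Longrightarrow>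
     x1*x2/x3*(x4/x5) + x6*x7/x3*(x8/x5) + x9*x10/x3*(x11/x5) = (x2*(x1*x4) + x7*(x6*x8) + x10*(x9*x11))/(x3*x5)"
    by (simp add: field_simps)
  have "(if 2 \<le> r then real (T choose (b+2)) * real (m1 choose (r - 2)) / D else 0)
           * (real ((b+2) choose 2) / K)
        + real (T choose (b+1)) * real (m1 choose r1) / D * (real ((b+1) * r) / K)
        + real (T choose b) * real (m1 choose r) / D * (real (Suc r choose 2) / K)
      = (p * (Y/2) + real (m1 choose r1) * Y + real (m1 choose r) * (Y/2)) / (D * K)"
  proof -
    have Dne: "D \<noteq> 0" and Kne: "K \<noteq> 0" using Dpos Kpos by auto
    show ?thesis unfolding ifr alg[OF Dne Kne] ea eb ec Y_def ..
  qed
  also have "\<dots> = Y * (p + 2 * real (m1 choose r1) + real (m1 choose r)) / (2 * (D * K))"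
    by (simp add: field_simps)
  also have "\<dots> = Y * real (Suc m choose r) / (2 * (D * K))"
    using ed unfolding p_def by simp
  also have "\<dots> = X * real T * (real r * real (Suc m choose r)) / (2 * (D * K))"
    unfolding Y_def by (simp add: mult.assoc)
  also have "\<dots> = X * real T * (real (Suc m) * real (m choose r1)) / (2 * (D * K))"
    unfolding ee ..
  also have "\<dots> = X * (real (Suc m) * real (m choose r1)) / (D * real (b + r))"
  proof -
    have canc: "\<And>X T Z D W :: real. T \<noteq> 0 \<Longrightarrow> X * T * Z / (2 * (D * (T * W / 2))) = X * Z / (D * W)"
    proof -
      fix X T Z D W :: real assume T: "T \<noteq> 0"
      have "X * T * Z = T * (X * Z)" "2 * (D * (T * W / 2)) = T * (D * W)" by simp_all
      thus "X * T * Z / (2 * (D * (T * W / 2))) = X * Z / (D * W)"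
        using nonzero_mult_divide_mult_cancel_left[OF T] by metis
    qed
    show ?thesis unfolding K_def CT using canc Tpos by simp
  qed
  also have "\<dots> = X * real (m choose r1) / D'"
  proof -
    have "D * real (b + r) = D' * real (Suc m)" using ef unfolding D_def D'_def .
    hence h: "D * real (b + r) = D' * real (Suc m)" .
    have canc2: "\<And>X S c D' :: real. S \<noteq> 0 \<Longrightarrow> X * (S * c) / (D' * S) = X * c / D'"
      by (simp add: field_simps)
    show ?thesis unfolding h by (rule canc2) simp
  qed
  finally have fin: "(if 2 \<le> r then real (T choose (b+2)) * real (m1 choose (r - 2)) / D else 0)
           * (real ((b+2) choose 2) / K)
        + real (T choose (b+1)) * real (m1 choose r1) / D * (real ((b+1) * r) / K)
        + real (T choose b) * real (m1 choose r) / D * (real (Suc r choose 2) / K)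
      = X * real (m choose r1) / D'" .
  show ?thesis using fin unfolding D_def D'_def X_def K_def .
qed

fun iter :: "nat \<Rightarrow> nat \<times> nat \<Rightarrow> (nat \<times> nat) pmf" where
  "iter 0 s = return_pmf s"
| "iter (Suc m) s = urn_step s \<bind> iter m"

lemma iter0: "iter 0 = return_pmf" by (rule ext) simp

lemma iter_Suc_right: "iter (Suc m) s = iter m s \<bind> urn_step"
proof (induction m arbitrary: s)
  case 0 then show ?case by (simp add: iter0 bind_return_pmf bind_return_pmf')
next
  case (Suc m)
  have e: "iter (Suc m) = (\<lambda>s'. iter m s' \<bind> urn_step)"
  proof
    fix s' show "iter (Suc m) s' = iter m s' \<bind> urn_step" using Suc.IH by simp
  qed
  have "iter (Suc (Suc m)) s = urn_step s \<bind> (\<lambda>s'. iter m s' \<bind> urn_step)"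
    by (subst iter.simps, subst e) (rule refl)
  also have "\<dots> = iter (Suc m) s \<bind> urn_step" by (simp add: bind_assoc_pmf)
  finally show ?case .
qed

lemma traj_nth: "j \<le> m \<Longrightarrow> map_pmf (\<lambda>xs. xs ! j) (urn_traj m s) = iter j s"
proof (induction m arbitrary: s j)
  case 0 then show ?case by simp
next
  case (Suc m)
  show ?case
  proof (cases j)
    case 0
    have "map_pmf (\<lambda>xs. xs ! j) (urn_traj (Suc m) s) = urn_step s \<bind> (\<lambda>s'. return_pmf s)"
      unfolding 0 by (simp add: map_bind_pmf map_pmf_comp map_pmf_const)
    then show ?thesis using 0 by simp
  next
    case (Suc j')
    have "map_pmf (\<lambda>xs. xs ! j) (urn_traj (Suc m) s) = urn_step s \<bind> (\<lambda>s'. map_pmf (\<lambda>xs. xs ! j') (urn_traj m s'))"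
      unfolding Suc by (simp add: map_bind_pmf map_pmf_comp)
    also have "\<dots> = urn_step s \<bind> iter j'" using Suc.IH[of j'] Suc.prems Suc by simp
    finally show ?thesis using Suc by simp
  qed
qed

lemma rel_facts: "rel (b,r) (b',r') \<Longrightarrow> b' + r' = b + r - 1 \<and> 1 \<le> r' \<and> b' \<le> b \<and> r' \<le> r + 1 \<and> (b = 0 \<longrightarrow> b' = 0)"
  by (auto simp: rel_def)

lemma iter_supp:
  "x \<in> set_pmf (iter m s) \<Longrightarrow> m + 1 \<le> fst s + snd s \<Longrightarrow>
     fst x + snd x = fst s + snd s - m \<and> (1 \<le> m \<longrightarrow> 1 \<le> snd x)"
proof (induction m arbitrary: x)
  case 0 then show ?case by simp
next
  case (Suc m)
  from Suc.prems(1) obtain y where y: "y \<in> set_pmf (iter m s)" "x \<in> set_pmf (urn_step y)"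
    unfolding iter_Suc_right by auto
  have ty: "fst y + snd y = fst s + snd s - m" using Suc.IH[OF y(1)] Suc.prems(2) by simp
  hence "2 \<le> fst y + snd y" using Suc.prems(2) by simp
  hence "rel y x" using step_support[of "fst y" "snd y" x] y(2) by simp
  hence "fst x + snd x = fst y + snd y - 1 \<and> 1 \<le> snd x"
    using rel_facts[of "fst y" "snd y" "fst x" "snd x"] by simp
  then show ?case using ty by simp
qed

lemma rel_pred:
  assumes "rel y (b, r)"
  shows "y \<in> {(b+2, r-1), (b+1, r), (b, Suc r)}"
  using assms by (cases y) (auto simp: rel_def)

definition Q :: "nat \<Rightarrow> nat \<Rightarrow> nat \<Rightarrow> nat \<Rightarrow> real" where
  "Q n m b r = (if b + r = n - m \<and> 1 \<le> r then
      real ((b + r) choose b) * real ((m - 1) choose (r - 1)) / real ((n - 1) choose (n - m - 1)) else 0)"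

lemma marg_base:
  assumes "2 \<le> n"
  shows "pmf (iter 1 (n,0)) (b,r) = Q n 1 b r"
proof -
  have it: "iter 1 (n,0) = urn_step (n,0)" by (simp add: iter0 bind_return_pmf')
  show ?thesis
  proof (cases "(b,r) = (n-2, 1)")
    case True
    have "pmf (urn_step (n,0)) (n-2, 0+1) = 1"
      using pmf_step2[of n 0] assms by simp
    moreover have "Q n 1 b r = 1" using True assms unfolding Q_def by (auto simp: numeral_2_eq_2)
    ultimately show ?thesis using True it by simp
  next
    case False
    have "(b,r) \<notin> set_pmf (urn_step (n,0))"
    proof
      assume "(b,r) \<in> set_pmf (urn_step (n,0))"
      hence "rel (n,0) (b,r)" using step_support[of n 0] assms by simp
      thus False using False by (auto simp: rel_def)
    qed
    hence "pmf (iter 1 (n,0)) (b,r) = 0" unfolding it by (simp add: pmf_eq_0_set_pmf)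
    moreover have "Q n 1 b r = 0"
      using False unfolding Q_def by (cases r) auto
    ultimately show ?thesis by simp
  qed
qed

lemma marg_step:
  assumes n: "2 \<le> n" and m: "1 \<le> m" "Suc m \<le> n - 1"
    and IH: "\<And>b r. pmf (iter m (n,0)) (b,r) = Q n m b r"
  shows "pmf (iter (Suc m) (n,0)) (b,r) = Q n (Suc m) b r"
proof (cases "b + r = n - Suc m \<and> 1 \<le> r")
  case False
  have "(b,r) \<notin> set_pmf (iter (Suc m) (n,0))"
  proof
    assume "(b,r) \<in> set_pmf (iter (Suc m) (n,0))"
    from iter_supp[OF this] m have "b + r = n - Suc m \<and> 1 \<le> r" by (simp del: binomial_Suc_Suc)
    with False show False by (simp del: binomial_Suc_Suc)
  qed
  hence "pmf (iter (Suc m) (n,0)) (b,r) = 0" by (simp add: pmf_eq_0_set_pmf)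
  thus ?thesis unfolding Q_def if_not_P[OF False] .
next
  case True
  then obtain r1 where r1: "r = Suc r1" by (cases r) auto
  obtain m1 where m1: "m = Suc m1" using m by (cases m) auto
  have bnd: "b + r = n - Suc m" using True by (simp del: binomial_Suc_Suc)
  have nsub: "n = b + r + Suc m" using bnd m by (simp del: binomial_Suc_Suc)
  let ?A = "{(b+2, r-1), (b+1, r), (b, Suc r)}"
  have "pmf (iter (Suc m) (n,0)) (b,r) = (\<integral>y. pmf (urn_step y) (b,r) \<partial>measure_pmf (iter m (n,0)))"
    unfolding iter_Suc_right pmf_bind ..
  also have "\<dots> = (\<Sum>y\<in>?A. pmf (urn_step y) (b,r) * pmf (iter m (n,0)) y)"
  proof (rule integral_measure_pmf_real)
    show "finite ?A" by (simp del: binomial_Suc_Suc)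
  next
    fix y assume y: "y \<in> set_pmf (iter m (n,0))" "pmf (urn_step y) (b,r) \<noteq> 0"
    have "fst y + snd y = n - m" using iter_supp[OF y(1)] m by (simp del: binomial_Suc_Suc)
    hence "2 \<le> fst y + snd y" using m by (simp del: binomial_Suc_Suc)
    moreover have "(b,r) \<in> set_pmf (urn_step y)" using y(2) by (simp add: pmf_eq_0_set_pmf)
    ultimately have "rel y (b,r)" using step_support[of "fst y" "snd y" "(b,r)"] by (simp del: binomial_Suc_Suc)
    thus "y \<in> ?A" by (rule rel_pred)
  qed
  also have "\<dots> = pmf (urn_step (b+2, r1)) (b,r) * pmf (iter m (n,0)) (b+2, r1)
      + pmf (urn_step (b+1, r)) (b,r) * pmf (iter m (n,0)) (b+1, r)
      + pmf (urn_step (b, Suc r)) (b,r) * pmf (iter m (n,0)) (b, Suc r)"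
    unfolding r1 by (simp del: binomial_Suc_Suc)
  also have "\<dots> = (if 2 \<le> r then real (Suc (b + r) choose (b+2)) * real (m1 choose (r - 2)) / real ((b + r + m) choose (b + r)) else 0)
           * (real ((b+2) choose 2) / real (Suc (b + r) choose 2))
        + real (Suc (b + r) choose (b+1)) * real (m1 choose r1) / real ((b + r + m) choose (b + r))
           * (real ((b+1) * r) / real (Suc (b + r) choose 2))
        + real (Suc (b + r) choose b) * real (m1 choose r) / real ((b + r + m) choose (b + r))
           * (real (Suc r choose 2) / real (Suc (b + r) choose 2))"
  proof -
    have t1: "pmf (urn_step (b+2, r1)) (b,r) * pmf (iter m (n,0)) (b+2, r1)
       = (if 2 \<le> r then real (Suc (b + r) choose (b+2)) * real (m1 choose (r - 2)) / real ((b + r + m) choose (b + r)) else 0)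
           * (real ((b+2) choose 2) / real (Suc (b + r) choose 2))"
    proof (cases r1)
      case 0
      then show ?thesis using IH[of "b+2" r1] unfolding Q_def nsub r1 by (simp del: binomial_Suc_Suc)
    next
      case (Suc r2)
      have "pmf (urn_step (b+2, r1)) (b,r) = real ((b+2) choose 2) / real ((b + 2 + r1) choose 2)"
        using pmf_step2[of "b+2" r1] unfolding r1 by (simp del: binomial_Suc_Suc)
      moreover have "pmf (iter m (n,0)) (b+2, r1) = real ((b+2+r1) choose (b+2)) * real (m1 choose (r1 - 1)) / real ((b + r + m) choose (b + r))"
        using IH[of "b+2" r1] unfolding Q_def nsub r1 m1 Suc by (simp del: binomial_Suc_Suc)
      ultimately show ?thesis unfolding r1 Suc by (simp del: binomial_Suc_Suc add: ac_simps)
    qed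
    have t2: "pmf (urn_step (b+1, r)) (b,r) * pmf (iter m (n,0)) (b+1, r)
       = real (Suc (b + r) choose (b+1)) * real (m1 choose r1) / real ((b + r + m) choose (b + r))
           * (real ((b+1) * r) / real (Suc (b + r) choose 2))"
    proof -
      have "pmf (urn_step (b+1, r)) (b,r) = real ((b+1) * r) / real ((b + 1 + r) choose 2)"
        using pmf_step1[of "b+1" r] r1 by (simp del: binomial_Suc_Suc)
      moreover have "pmf (iter m (n,0)) (b+1, r) = real ((b+1+r) choose (b+1)) * real (m1 choose r1) / real ((b + r + m) choose (b + r))"
        using IH[of "b+1" r] unfolding Q_def nsub r1 m1 by (simp del: binomial_Suc_Suc)
      ultimately show ?thesis by (simp del: binomial_Suc_Suc add: ac_simps)
    qed
    have t3: "pmf (urn_step (b, Suc r)) (b,r) * pmf (iter m (n,0)) (b, Suc r)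
       = real (Suc (b + r) choose b) * real (m1 choose r) / real ((b + r + m) choose (b + r))
           * (real (Suc r choose 2) / real (Suc (b + r) choose 2))"
    proof -
      have "pmf (urn_step (b, Suc r)) (b,r) = real (Suc r choose 2) / real ((b + Suc r) choose 2)"
        using pmf_step0[of "Suc r" b] r1 by (simp del: binomial_Suc_Suc)
      moreover have "pmf (iter m (n,0)) (b, Suc r) = real ((b + Suc r) choose b) * real (m1 choose r) / real ((b + r + m) choose (b + r))"
        using IH[of b "Suc r"] unfolding Q_def nsub m1 by (simp del: binomial_Suc_Suc)
      ultimately show ?thesis by (simp del: binomial_Suc_Suc add: ac_simps)
    qed
    show ?thesis unfolding t1 t2 t3 ..
  qed
  also have "\<dots> = real ((b + r) choose b) * real (m choose r1) / real ((b + r + m) choose (b + r1))"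
    using ident[of "b + r + m" b r1 m1] unfolding r1 m1 by (simp del: binomial_Suc_Suc)
  also have "\<dots> = Q n (Suc m) b r"
    unfolding Q_def nsub r1 by (simp del: binomial_Suc_Suc)
  finally show ?thesis .
qed

lemma marg:
  assumes "2 \<le> n" "1 \<le> m" "m \<le> n - 1"
  shows "pmf (iter m (n,0)) (b,r) = Q n m b r"
  using assms(2,3)
proof (induction m arbitrary: b r rule: nat_induct_at_least)
  case base then show ?case using marg_base[OF assms(1)] by simp
next
  case (Suc m) then show ?case using marg_step[OF assms(1)] by simp
qed

lemma traj_supp:
  "xs \<in> set_pmf (urn_traj m s) \<Longrightarrow> m + 1 \<le> fst s + snd s \<Longrightarrow>
     length xs = Suc m \<and> xs ! 0 = s \<and> (\<forall>i<m. rel (xs ! i) (xs ! Suc i))"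
proof (induction m arbitrary: s xs)
  case 0 then show ?case by simp
next
  case (Suc m)
  from Suc.prems(1) obtain s' ys where s': "s' \<in> set_pmf (urn_step s)" "ys \<in> set_pmf (urn_traj m s')"
    and xs: "xs = s # ys" by auto
  have "rel s s'" using step_support[of "fst s" "snd s" s'] s'(1) Suc.prems(2) by simp
  hence "fst s' + snd s' = fst s + snd s - 1"
    using rel_facts[of "fst s" "snd s" "fst s'" "snd s'"] by simp
  hence "m + 1 \<le> fst s' + snd s'" using Suc.prems(2) by simp
  from Suc.IH[OF s'(2) this] have ih: "length ys = Suc m" "ys ! 0 = s'" "\<forall>i<m. rel (ys ! i) (ys ! Suc i)"
    by auto
  have "\<forall>i<Suc m. rel (xs ! i) (xs ! Suc i)"
  proof (intro allI impI)
    fix i assume "i < Suc m"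
    thus "rel (xs ! i) (xs ! Suc i)"
      using ih \<open>rel s s'\<close> unfolding xs by (cases i) auto
  qed
  thus ?case using ih xs by simp
qed

lemma rel_facts': "rel s s' \<Longrightarrow> fst s' + snd s' = fst s + snd s - 1 \<and> 1 \<le> snd s' \<and> fst s' \<le> fst s \<and> snd s' \<le> snd s + 1 \<and> (fst s = 0 \<longrightarrow> fst s' = 0)"
  by (cases s, cases s') (auto simp: rel_def)

definition Uf :: "nat \<Rightarrow> (nat \<times> nat) list \<Rightarrow> nat \<Rightarrow> nat" where
  "Uf n xs k = (if k < n then snd (xs ! k) else 0)"

locale trajc =
  fixes n :: nat and xs :: "(nat \<times> nat) list"
  assumes n2: "2 \<le> n" and len: "length xs = n" and x0: "xs ! 0 = (n, 0)"
    and rl: "\<And>i. i < n - 1 \<Longrightarrow> rel (xs ! i) (xs ! Suc i)"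
begin

lemma tot: "i \<le> n - 1 \<Longrightarrow> fst (xs ! i) + snd (xs ! i) = n - i"
proof (induction i)
  case 0 then show ?case using x0 by simp
next
  case (Suc i)
  have "rel (xs ! i) (xs ! Suc i)" using rl Suc.prems by simp
  then show ?case using Suc rel_facts'[of "xs ! i" "xs ! Suc i"] by simp
qed

lemma red_pos: "1 \<le> i \<Longrightarrow> i \<le> n - 1 \<Longrightarrow> 1 \<le> snd (xs ! i)"
proof -
  assume "1 \<le> i" "i \<le> n - 1"
  then obtain j where j: "i = Suc j" by (cases i) auto
  have "rel (xs ! j) (xs ! i)" using rl \<open>i \<le> n - 1\<close> j by simp
  thus ?thesis using rel_facts'[of "xs ! j" "xs ! i"] by simp
qed

lemma black_absorb: "i \<le> j \<Longrightarrow> j \<le> n - 1 \<Longrightarrow> fst (xs ! i) = 0 \<Longrightarrow> fst (xs ! j) = 0"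
proof (induction j)
  case 0 then show ?case by simp
next
  case (Suc j)
  show ?case
  proof (cases "i = Suc j")
    case True then show ?thesis using Suc by simp
  next
    case False
    hence "fst (xs ! j) = 0" using Suc by simp
    moreover have "rel (xs ! j) (xs ! Suc j)" using rl Suc.prems by simp
    ultimately show ?thesis using rel_facts'[of "xs ! j" "xs ! Suc j"] by simp
  qed
qed

lemma red_le: "i \<le> j \<Longrightarrow> j \<le> n - 1 \<Longrightarrow> snd (xs ! j) \<le> snd (xs ! i) + (j - i)"
proof (induction j)
  case 0 then show ?case by simp
next
  case (Suc j)
  show ?case
  proof (cases "i = Suc j")
    case True then show ?thesis by simp
  next
    case False
    hence "snd (xs ! j) \<le> snd (xs ! i) + (j - i)" using Suc by simp
    moreover have "rel (xs ! j) (xs ! Suc j)" using rl Suc.prems by simp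
    moreover have "snd (xs ! Suc j) \<le> snd (xs ! j) + 1" using rel_facts'[OF calculation(2)] by simp
    moreover have "i \<le> j" using False Suc.prems by simp
    ultimately show ?thesis by arith
  qed
qed

lemma red_init: "i \<le> j \<Longrightarrow> j \<le> n - 1 \<Longrightarrow> snd (xs ! j) = j \<Longrightarrow> snd (xs ! i) = i"
proof -
  assume a: "i \<le> j" "j \<le> n - 1" "snd (xs ! j) = j"
  have "snd (xs ! i) \<le> snd (xs ! 0) + (i - 0)" using red_le[of 0 i] a by simp
  hence "snd (xs ! i) \<le> i" using x0 by simp
  moreover have "snd (xs ! j) \<le> snd (xs ! i) + (j - i)" using red_le[OF a(1) a(2)] .
  ultimately show ?thesis using a by arith
qed

lemma first_red: "snd (xs ! 1) = 1"
proof -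
  have "rel (xs ! 0) (xs ! 1)" using rl[of 0] n2 by simp
  thus ?thesis using x0 by (auto simp: rel_def)
qed

abbreviation U where "U \<equiv> Uf n xs"

lemma U_def: "U k = (if k < n then snd (xs ! k) else 0)" by (simp add: Uf_def)

lemma tau_ge: assumes "1 \<le> k" "k \<le> n - 1"
  shows "k \<le> tau n U \<longleftrightarrow> fst (xs ! (n - k)) = 0"
proof -
  let ?S = "{k. 1 \<le> k \<and> k \<le> n \<and> U (n - k) = k}"
  have fin: "finite ?S" by (rule finite_subset[of _ "{..n}"]) auto
  have mem: "j \<in> ?S \<longleftrightarrow> 1 \<le> j \<and> j \<le> n \<and> fst (xs ! (n - j)) = 0" for j
  proof (cases "1 \<le> j \<and> j \<le> n")
    case True
    have "n - j \<le> n - 1" using True by arith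
    hence "fst (xs ! (n - j)) + snd (xs ! (n - j)) = n - (n - j)" using tot[of "n - j"] by simp
    hence "fst (xs ! (n - j)) + snd (xs ! (n - j)) = j" using True by simp
    moreover have "n - j < n" using True by simp
    ultimately show ?thesis using True unfolding U_def by auto
  qed auto
  have np: "1 \<le> n - 1" using n2 by simp
  have "1 \<le> snd (xs ! (n - 1))" using red_pos[OF np order.refl] .
  moreover have "fst (xs ! (n - 1)) + snd (xs ! (n - 1)) = 1" using tot[OF order.refl] n2 by simp
  ultimately have "fst (xs ! (n - 1)) = 0" by simp
  hence "1 \<in> ?S" using mem[of 1] n2 by simp
  hence ne: "?S \<noteq> {}" by blast
  have "k \<le> tau n U \<longleftrightarrow> (\<exists>j\<in>?S. k \<le> j)" unfolding tau_def using Max_ge_iff[OF fin ne] by simp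
  also have "\<dots> \<longleftrightarrow> fst (xs ! (n - k)) = 0"
  proof
    assume "\<exists>j\<in>?S. k \<le> j"
    then obtain j where j: "j \<in> ?S" "k \<le> j" by blast
    hence "fst (xs ! (n - j)) = 0" "1 \<le> j" "j \<le> n" using mem by auto
    thus "fst (xs ! (n - k)) = 0" using black_absorb[of "n - j" "n - k"] j(2) assms by simp
  next
    assume "fst (xs ! (n - k)) = 0"
    hence "k \<in> ?S" using mem assms by simp
    thus "\<exists>j\<in>?S. k \<le> j" by blast
  qed
  finally show ?thesis .
qed

lemma tau'_ge: assumes "1 \<le> k" "k \<le> n - 1"
  shows "k \<le> tau' n U \<longleftrightarrow> snd (xs ! k) = k"
proof -
  let ?S = "{k. 1 \<le> k \<and> k \<le> n \<and> U k = k}"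
  have fin: "finite ?S" by (rule finite_subset[of _ "{..n}"]) auto
  have mem: "j \<in> ?S \<longleftrightarrow> 1 \<le> j \<and> j \<le> n - 1 \<and> snd (xs ! j) = j" for j
    unfolding U_def using n2 by auto
  have "1 \<in> ?S" using mem[of 1] first_red n2 by simp
  hence ne: "?S \<noteq> {}" by blast
  have "k \<le> tau' n U \<longleftrightarrow> (\<exists>j\<in>?S. k \<le> j)" unfolding tau'_def using Max_ge_iff[OF fin ne] by simp
  also have "\<dots> \<longleftrightarrow> snd (xs ! k) = k"
  proof
    assume "\<exists>j\<in>?S. k \<le> j"
    then obtain j where j: "j \<in> ?S" "k \<le> j" by blast
    thus "snd (xs ! k) = k" using red_init[of k j] mem by auto
  next
    assume "snd (xs ! k) = k"
    hence "k \<in> ?S" using mem assms by simp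
    thus "\<exists>j\<in>?S. k \<le> j" by blast
  qed
  finally show ?thesis .
qed

lemma tau_ge_big: assumes "n \<le> k" shows "\<not> k \<le> tau n U"
proof -
  let ?S = "{k. 1 \<le> k \<and> k \<le> n \<and> U (n - k) = k}"
  have fin: "finite ?S" by (rule finite_subset[of _ "{..n}"]) auto
  have "U 0 = 0" unfolding U_def using x0 n2 by simp
  have "\<forall>j\<in>?S. j < k"
  proof
    fix j assume j: "j \<in> ?S"
    show "j < k"
    proof (rule ccontr)
      assume "\<not> j < k"
      hence "j = n" using j assms by simp
      thus False using j \<open>U 0 = 0\<close> n2 by simp
    qed
  qed
  moreover have "?S \<noteq> {}"
  proof -
    have np: "1 \<le> n - 1" using n2 by simp
    have "1 \<le> snd (xs ! (n - 1))" using red_pos[OF np order.refl] .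
    moreover have "fst (xs ! (n - 1)) + snd (xs ! (n - 1)) = 1" using tot[OF order.refl] n2 by simp
    ultimately have "snd (xs ! (n - 1)) = 1" by simp
    hence "1 \<in> ?S" unfolding U_def using n2 by simp
    thus ?thesis by blast
  qed
  ultimately show ?thesis unfolding tau_def using Max_ge_iff[OF fin] by auto
qed

lemma tau'_ge_big: assumes "n \<le> k" shows "\<not> k \<le> tau' n U"
proof -
  let ?S = "{k. 1 \<le> k \<and> k \<le> n \<and> U k = k}"
  have fin: "finite ?S" by (rule finite_subset[of _ "{..n}"]) auto
  have "\<forall>j\<in>?S. j < k"
  proof
    fix j assume j: "j \<in> ?S"
    show "j < k"
    proof (rule ccontr)
      assume "\<not> j < k"
      hence "j = n" using j assms by simp
      thus False using j n2 unfolding U_def by simp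
    qed
  qed
  moreover have "?S \<noteq> {}"
  proof -
    have "1 \<in> ?S" unfolding U_def using first_red n2 by simp
    thus ?thesis by blast
  qed
  ultimately show ?thesis unfolding tau'_def using Max_ge_iff[OF fin] by auto
qed

end

lemma meas_eq: "(\<And>x. x \<in> set_pmf M \<Longrightarrow> x \<in> A \<longleftrightarrow> x \<in> B) \<Longrightarrow> measure_pmf.prob M A = measure_pmf.prob M B"
  by (intro measure_pmf.finite_measure_eq_AE) (auto simp: AE_measure_pmf_iff)

lemma urn_trajc: "2 \<le> n \<Longrightarrow> xs \<in> set_pmf (urn_traj (n - 1) (n, 0)) \<Longrightarrow> trajc n xs"
  using traj_supp[of xs "n - 1" "(n,0)"] by unfold_locales auto

lemma urn_alt: "urn n = map_pmf (\<lambda>xs k. if k < n then snd (xs ! k) else 0) (urn_traj (n - 1) (n, 0))"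
  unfolding urn_def ..

lemma Uq: "Uf n xs = (\<lambda>k. if k < n then snd (xs ! k) else 0)"
  by (rule ext) (simp add: Uf_def)

lemma P_tau:
  assumes n: "2 \<le> n" and k: "1 \<le> k" "k \<le> n - 1"
  shows "measure_pmf.prob (urn n) {U. k \<le> tau n U} = real ((n - k - 1) choose (k - 1)) / real ((n - 1) choose (k - 1))"
proof -
  let ?T = "urn_traj (n - 1) (n, 0)"
  have "measure_pmf.prob (urn n) {U. k \<le> tau n U} = measure_pmf.prob ?T {xs. fst (xs ! (n - k)) = 0}"
    unfolding urn_alt measure_map_pmf
  proof (rule meas_eq)
    fix xs assume "xs \<in> set_pmf ?T"
    hence tc: "trajc n xs" using urn_trajc n by simp
    show "xs \<in> (\<lambda>xs k. if k < n then snd (xs ! k) else 0) -` {U. k \<le> tau n U} \<longleftrightarrow> xs \<in> {xs. fst (xs ! (n - k)) = 0}"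
      using trajc.tau_ge[OF tc k] unfolding Uq by simp
  qed
  also have "\<dots> = measure_pmf.prob (map_pmf (\<lambda>xs. xs ! (n - k)) ?T) {s. fst s = 0}"
    by (simp add: vimage_def)
  also have "\<dots> = measure_pmf.prob (iter (n - k) (n, 0)) {s. fst s = 0}"
  proof -
    have "n - k \<le> n - 1" using k by simp
    thus ?thesis using traj_nth[of "n - k" "n - 1" "(n,0)"] by simp
  qed
  also have "\<dots> = measure_pmf.prob (iter (n - k) (n, 0)) {(0, k)}"
  proof (rule meas_eq)
    fix s assume "s \<in> set_pmf (iter (n - k) (n, 0))"
    from iter_supp[OF this] k have "fst s + snd s = k" by simp
    thus "s \<in> {s. fst s = 0} \<longleftrightarrow> s \<in> {(0, k)}" by (cases s) auto
  qed
  also have "\<dots> = Q n (n - k) 0 k" using marg[of n "n - k" 0 k] n k by (simp add: measure_pmf_single)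
  also have "\<dots> = real ((n - k - 1) choose (k - 1)) / real ((n - 1) choose (k - 1))"
    unfolding Q_def using k by simp
  finally show ?thesis .
qed

lemma P_tau':
  assumes n: "2 \<le> n" and k: "1 \<le> k" "k \<le> n - 1"
  shows "measure_pmf.prob (urn n) {U. k \<le> tau' n U} = (if 2 * k \<le> n then real ((n - k) choose (n - 2 * k)) / real ((n - 1) choose (n - k - 1)) else 0)"
proof -
  let ?T = "urn_traj (n - 1) (n, 0)"
  have "measure_pmf.prob (urn n) {U. k \<le> tau' n U} = measure_pmf.prob ?T {xs. snd (xs ! k) = k}"
    unfolding urn_alt measure_map_pmf
  proof (rule meas_eq)
    fix xs assume "xs \<in> set_pmf ?T"
    hence tc: "trajc n xs" using urn_trajc n by simp
    show "xs \<in> (\<lambda>xs k. if k < n then snd (xs ! k) else 0) -` {U. k \<le> tau' n U} \<longleftrightarrow> xs \<in> {xs. snd (xs ! k) = k}"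
      using trajc.tau'_ge[OF tc k] unfolding Uq by simp
  qed
  also have "\<dots> = measure_pmf.prob (map_pmf (\<lambda>xs. xs ! k) ?T) {s. snd s = k}"
    by (simp add: vimage_def)
  also have "\<dots> = measure_pmf.prob (iter k (n, 0)) {s. snd s = k}"
    using traj_nth[of k "n - 1" "(n,0)"] k by simp
  also have "\<dots> = (if 2 * k \<le> n then real ((n - k) choose (n - 2 * k)) / real ((n - 1) choose (n - k - 1)) else 0)"
  proof (cases "2 * k \<le> n")
    case True
    have "measure_pmf.prob (iter k (n, 0)) {s. snd s = k} = measure_pmf.prob (iter k (n, 0)) {(n - 2 * k, k)}"
    proof (rule meas_eq)
      fix s assume "s \<in> set_pmf (iter k (n, 0))"
      from iter_supp[OF this] k have "fst s + snd s = n - k" by simp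
      thus "s \<in> {s. snd s = k} \<longleftrightarrow> s \<in> {(n - 2 * k, k)}" using True by (cases s) auto
    qed
    also have "\<dots> = Q n k (n - 2 * k) k" using marg[of n k "n - 2 * k" k] n k by (simp add: measure_pmf_single)
    also have "\<dots> = real ((n - k) choose (n - 2 * k)) / real ((n - 1) choose (n - k - 1))"
      unfolding Q_def using k True by simp
    finally show ?thesis using True by simp
  next
    case False
    have "measure_pmf.prob (iter k (n, 0)) {s. snd s = k} = measure_pmf.prob (iter k (n, 0)) {}"
    proof (rule meas_eq)
      fix s assume "s \<in> set_pmf (iter k (n, 0))"
      from iter_supp[OF this] k have "fst s + snd s = n - k" by simp
      thus "s \<in> {s. snd s = k} \<longleftrightarrow> s \<in> {}" using False by (cases s) auto
    qed
    thus ?thesis using False by simp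
  qed
  finally show ?thesis .
qed

lemma P_tau_big: "2 \<le> n \<Longrightarrow> n \<le> k \<Longrightarrow> measure_pmf.prob (urn n) {U. k \<le> tau n U} = 0"
proof -
  assume n: "2 \<le> n" "n \<le> k"
  have "measure_pmf.prob (urn n) {U. k \<le> tau n U} = measure_pmf.prob (urn_traj (n - 1) (n, 0)) {}"
    unfolding urn_alt measure_map_pmf
  proof (rule meas_eq)
    fix xs assume "xs \<in> set_pmf (urn_traj (n - 1) (n, 0))"
    hence tc: "trajc n xs" using urn_trajc n by simp
    show "xs \<in> (\<lambda>xs k. if k < n then snd (xs ! k) else 0) -` {U. k \<le> tau n U} \<longleftrightarrow> xs \<in> {}"
      using trajc.tau_ge_big[OF tc n(2)] unfolding Uq by simp
  qed
  thus ?thesis by simp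
qed

lemma P_tau'_big: "2 \<le> n \<Longrightarrow> n \<le> k \<Longrightarrow> measure_pmf.prob (urn n) {U. k \<le> tau' n U} = 0"
proof -
  assume n: "2 \<le> n" "n \<le> k"
  have "measure_pmf.prob (urn n) {U. k \<le> tau' n U} = measure_pmf.prob (urn_traj (n - 1) (n, 0)) {}"
    unfolding urn_alt measure_map_pmf
  proof (rule meas_eq)
    fix xs assume "xs \<in> set_pmf (urn_traj (n - 1) (n, 0))"
    hence tc: "trajc n xs" using urn_trajc n by simp
    show "xs \<in> (\<lambda>xs k. if k < n then snd (xs ! k) else 0) -` {U. k \<le> tau' n U} \<longleftrightarrow> xs \<in> {}"
      using trajc.tau'_ge_big[OF tc n(2)] unfolding Uq by simp
  qed
  thus ?thesis by simp
qed

definition R :: "nat \<Rightarrow> nat \<Rightarrow> real" where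
  "R n k = (\<Prod>i<k. real n - real k - real i) / (\<Prod>i<k. real n - 1 - real i)"

lemma prod_binom: "(\<Prod>i<k. real N - real i) = real (N choose k) * fact k"
proof -
  have "real (N choose k) = (\<Prod>i=0..<k. real N - real i) / fact k"
    unfolding binomial_gbinomial gbinomial_prod_rev by simp
  thus ?thesis by (simp add: atLeast0LessThan)
qed

lemma R_eq: assumes "1 \<le> k" "k \<le> n - 1"
  shows "R n k = real ((n - k) choose k) / real ((n - 1) choose k)"
proof -
  have a: "(\<Prod>i<k. real n - real k - real i) = (\<Prod>i<k. real (n - k) - real i)"
    using assms by (simp add: of_nat_diff)
  have b: "(\<Prod>i<k. real n - 1 - real i) = (\<Prod>i<k. real (n - 1) - real i)"
    using assms by (simp add: of_nat_diff)
  have f: "(fact k :: real) \<noteq> 0" by simp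
  show ?thesis unfolding R_def a b prod_binom using f by simp
qed

lemma R_big: assumes "1 \<le> n" "n \<le> k" shows "R n k = 0"
proof -
  have "(\<Prod>i<k. real n - 1 - real i) = 0"
    by (rule prod_zero) (use assms in \<open>auto intro!: bexI[of _ "n - 1"] simp: of_nat_diff\<close>)
  thus ?thesis unfolding R_def by simp
qed

lemma binom_tau: assumes "1 \<le> k" "k \<le> n - 1"
  shows "real ((n - k - 1) choose (k - 1)) / real ((n - 1) choose (k - 1)) = real ((n - k) choose k) / real ((n - 1) choose k)"
proof -
  obtain k1 where k1: "k = Suc k1" using assms by (cases k) auto
  have e1: "k * ((n - k) choose k) = (n - k) * ((n - k - 1) choose (k - 1))"
    unfolding k1 using binomial_absorption[of k1 "n - Suc k1"] by simp
  define b where "b = n - 1 - Suc k1"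
  have b: "n - 1 = Suc (k1 + b)" unfolding b_def using assms k1 by simp
  have e2: "k * ((n - 1) choose k) = (n - k) * ((n - 1) choose (k - 1))"
  proof -
    have "Suc k1 * (Suc (k1 + b) choose Suc k1) = Suc b * (Suc (k1 + b) choose k1)"
      by (rule Suc_times_binomial_add)
    moreover have "Suc b = n - k" using b k1 by simp
    ultimately show ?thesis unfolding k1 b by simp
  qed
  have pos: "real (n - k) > 0" "real k > 0" using assms by auto
  have e1r: "real k * real ((n - k) choose k) = real (n - k) * real ((n - k - 1) choose (k - 1))"
    using arg_cong[OF e1, of real] by (simp only: of_nat_mult)
  have e2r: "real k * real ((n - 1) choose k) = real (n - k) * real ((n - 1) choose (k - 1))"
    using arg_cong[OF e2, of real] by (simp only: of_nat_mult)
  have r1: "real ((n - k) choose k) = real (n - k) * real ((n - k - 1) choose (k - 1)) / real k"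
    unfolding eq_divide_eq using e1r pos by (simp add: mult.commute)
  have r2: "real ((n - 1) choose k) = real (n - k) * real ((n - 1) choose (k - 1)) / real k"
    unfolding eq_divide_eq using e2r pos by (simp add: mult.commute)
  show ?thesis unfolding r1 r2 using pos by (simp add: field_simps)
qed

lemma binom_tau': assumes "1 \<le> k" "k \<le> n - 1"
  shows "(if 2 * k \<le> n then real ((n - k) choose (n - 2 * k)) / real ((n - 1) choose (n - k - 1)) else 0)
     = real ((n - k) choose k) / real ((n - 1) choose k)"
proof (cases "2 * k \<le> n")
  case True
  have "(n - k) choose (n - 2 * k) = (n - k) choose k"
    using binomial_symmetric[of "n - 2 * k" "n - k"] True by (simp add: diff_diff_left mult_2)
  moreover have "(n - 1) choose (n - k - 1) = (n - 1) choose k"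
    using binomial_symmetric[of "n - k - 1" "n - 1"] assms by simp
  ultimately show ?thesis using True by simp
next
  case False
  hence "(n - k) choose k = 0" by simp
  thus ?thesis using False by simp
qed

lemma tail_tau: assumes "2 \<le> n" "1 \<le> k"
  shows "measure_pmf.prob (urn n) {U. k \<le> tau n U} = R n k"
proof (cases "k \<le> n - 1")
  case True
  thus ?thesis using P_tau[OF assms(1) assms(2) True] binom_tau[OF assms(2) True] R_eq[OF assms(2) True] by simp
next
  case False
  thus ?thesis using P_tau_big[of n k] R_big[of n k] assms by simp
qed

lemma tail_tau': assumes "2 \<le> n" "1 \<le> k"
  shows "measure_pmf.prob (urn n) {U. k \<le> tau' n U} = R n k"
proof (cases "k \<le> n - 1")
  case True
  thus ?thesis using P_tau'[OF assms(1) assms(2) True] binom_tau'[OF assms(2) True] R_eq[OF assms(2) True] by simp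
next
  case False
  thus ?thesis using P_tau'_big[of n k] R_big[of n k] assms by simp
qed

lemma tail_eq: assumes "2 \<le> n"
  shows "measure_pmf.prob (urn n) {U. k \<le> tau n U} = measure_pmf.prob (urn n) {U. k \<le> tau' n U}"
proof (cases "k = 0")
  case True then show ?thesis by simp
next
  case False then show ?thesis using tail_tau[OF assms] tail_tau'[OF assms] by simp
qed

lemma dist_eq: assumes "2 \<le> n" shows "map_pmf (tau n) (urn n) = map_pmf (tau' n) (urn n)"
proof (rule pmf_eqI)
  fix j
  have d: "\<And>f :: (nat \<Rightarrow> nat) \<Rightarrow> nat. f -` {j} = {U. j \<le> f U} - {U. Suc j \<le> f U}" by auto
  have m: "\<And>f :: (nat \<Rightarrow> nat) \<Rightarrow> nat. measure_pmf.prob (urn n) (f -` {j})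
     = measure_pmf.prob (urn n) {U. j \<le> f U} - measure_pmf.prob (urn n) {U. Suc j \<le> f U}"
    unfolding d by (rule measure_pmf.finite_measure_Diff) auto
  show "pmf (map_pmf (tau n) (urn n)) j = pmf (map_pmf (tau' n) (urn n)) j"
    unfolding pmf_map m using tail_eq[OF assms] by simp
qed

lemma R_prod: assumes "1 \<le> k" "k < n"
  shows "R n k = (\<Prod>i<k. 1 - (real k - 1) / (real n - 1 - real i))"
proof -
  have "(\<Prod>i<k. 1 - (real k - 1) / (real n - 1 - real i)) = (\<Prod>i<k. (real n - real k - real i) / (real n - 1 - real i))"
  proof (rule prod.cong)
    fix i assume "i \<in> {..<k}"
    hence "real n - 1 - real i > 0" using assms by simp
    thus "1 - (real k - 1) / (real n - 1 - real i) = (real n - real k - real i) / (real n - 1 - real i)"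
      by (simp add: field_simps)
  qed simp
  thus ?thesis unfolding R_def by (simp add: prod_dividef)
qed

lemma R_upper: assumes "1 \<le> k" "3 * k \<le> n"
  shows "R n k \<le> exp (- (real k * ((real k - 1) / (real n - 1))))"
proof -
  define a where "a i = (real k - 1) / (real n - 1 - real i)" for i
  have apos: "0 \<le> a i" "a i \<le> 1" if "i < k" for i
  proof -
    have d: "real n - 1 - real i > 0" "real k - 1 \<ge> 0" "real k - 1 \<le> real n - 1 - real i"
      using assms that by auto
    show "0 \<le> a i" unfolding a_def using d by simp
    show "a i \<le> 1" unfolding a_def using d by simp
  qed
  have alow: "(real k - 1) / (real n - 1) \<le> a i" if "i < k" for i
    unfolding a_def using assms that by (intro divide_left_mono) auto
  have "R n k = (\<Prod>i<k. 1 - a i)" unfolding a_def using R_prod assms by simp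
  also have "\<dots> \<le> (\<Prod>i<k. exp (- a i))"
    by (rule prod_mono) (use apos exp_ge_add_one_self[of "- a _"] in auto)
  also have "\<dots> = exp (\<Sum>i<k. - a i)" by (simp add: exp_sum)
  also have "\<dots> = exp (- (\<Sum>i<k. a i))" by (simp add: sum_negf)
  also have "\<dots> \<le> exp (- (real k * ((real k - 1) / (real n - 1))))"
  proof -
    have "(\<Sum>i<k. (real k - 1) / (real n - 1)) \<le> (\<Sum>i<k. a i)"
      by (rule sum_mono) (use alow in auto)
    thus ?thesis by simp
  qed
  finally show ?thesis .
qed

lemma R_lower: assumes "1 \<le> k" "3 * k \<le> n"
  defines "y \<equiv> (real k - 1) / (real n - real k)"
  shows "exp (- (real k * (y + 2 * y\<^sup>2))) \<le> R n k"
proof -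
  define a where "a i = (real k - 1) / (real n - 1 - real i)" for i
  have nk: "real n - real k > 0" using assms by simp
  have ypos: "0 \<le> y" and yhalf: "y \<le> 1/2"
    unfolding y_def using assms nk by (auto simp: field_simps)
  have abnd: "0 \<le> a i" "a i \<le> y" if "i < k" for i
  proof -
    have d: "real n - 1 - real i \<ge> real n - real k" "real k - 1 \<ge> 0"
      using assms that by auto
    show "0 \<le> a i" unfolding a_def using d nk by simp
    show "a i \<le> y" unfolding a_def y_def using d nk by (intro divide_left_mono) auto
  qed
  have "exp (- (real k * (y + 2 * y\<^sup>2))) = (\<Prod>i<k. exp (- y - 2 * y\<^sup>2))"
  proof -
    have "- (real k * (y + 2 * y\<^sup>2)) = real k * (- y - 2 * y\<^sup>2)" by (simp add: algebra_simps)
    thus ?thesis by (simp add: exp_of_nat_mult)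
  qed
  also have "\<dots> \<le> (\<Prod>i<k. 1 - a i)"
  proof (rule prod_mono)
    fix i assume "i \<in> {..<k}"
    hence i: "0 \<le> a i" "a i \<le> y" using abnd by auto
    have "a i \<le> 1/2" using i yhalf by simp
    have "- y - 2 * y\<^sup>2 \<le> - a i - 2 * (a i)\<^sup>2"
      using i power_mono[OF i(2) i(1), of 2] by linarith
    also have "\<dots> \<le> ln (1 - a i)" by (rule ln_one_minus_pos_lower_bound) (use i \<open>a i \<le> 1/2\<close> in auto)
    finally have "exp (- y - 2 * y\<^sup>2) \<le> exp (ln (1 - a i))" by simp
    also have "\<dots> = 1 - a i" using \<open>a i \<le> 1/2\<close> by simp
    finally show "0 \<le> exp (- y - 2 * y\<^sup>2) \<and> exp (- y - 2 * y\<^sup>2) \<le> 1 - a i" by simp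
  qed
  also have "\<dots> = R n k" unfolding a_def using R_prod assms by simp
  finally show ?thesis .
qed

lemma inv_sqrt_lim: "(\<lambda>n::nat. 1 / sqrt (real n)) \<longlonglongrightarrow> 0"
  by real_asymp

lemma n_frac_lim: "(\<lambda>n::nat. real n / (real n - 1)) \<longlonglongrightarrow> 1"
  by real_asymp

lemma alg1: fixes s k :: real assumes "s > 0" "s\<^sup>2 \<noteq> 1"
  shows "k * ((k - 1) / (s\<^sup>2 - 1)) = (k / s) * ((k / s) - 1 / s) * (s\<^sup>2 / (s\<^sup>2 - 1))"
proof -
  have "s\<^sup>2 - 1 \<noteq> 0" using assms by simp
  thus ?thesis using assms by (simp add: field_simps power2_eq_square)
qed

lemma alg2: fixes s k :: real assumes "s > 0" "s\<^sup>2 - k \<noteq> 0"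
  shows "k * ((k - 1) / (s\<^sup>2 - k) + 2 * ((k - 1) / (s\<^sup>2 - k))\<^sup>2)
    = (k / s) * ((k / s) - 1 / s) / (1 - (k / s) * (1 / s))
      + 2 * (k / s) * ((k / s) - 1 / s)\<^sup>2 * (1 / s) / (1 - (k / s) * (1 / s))\<^sup>2"
proof -
  have e1: "1 - (k / s) * (1 / s) = (s\<^sup>2 - k) / s\<^sup>2" using assms by (simp add: field_simps power2_eq_square)
  have e2: "(k / s) * ((k / s) - 1 / s) = k * (k - 1) / s\<^sup>2" using assms by (simp add: field_simps power2_eq_square)
  have e3: "2 * (k / s) * ((k / s) - 1 / s)\<^sup>2 * (1 / s) = 2 * k * (k - 1)\<^sup>2 / (s\<^sup>2)\<^sup>2"
    using assms by (simp add: field_simps power2_eq_square)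
  have s2: "s\<^sup>2 \<noteq> 0" using assms by simp
  have gen: "\<And>a b D S :: real. S \<noteq> 0 \<Longrightarrow> D \<noteq> 0 \<Longrightarrow> (a / S) / (D / S) + (b / S\<^sup>2) / (D / S)\<^sup>2 = a / D + b / D\<^sup>2"
    by (simp add: field_simps power2_eq_square)
  have gen2: "\<And>k D :: real. D \<noteq> 0 \<Longrightarrow> k * ((k - 1) / D + 2 * ((k - 1) / D)\<^sup>2) = k * (k - 1) / D + 2 * k * (k - 1)\<^sup>2 / D\<^sup>2"
    by (simp add: field_simps power2_eq_square)
  show ?thesis unfolding e1 e2 e3 gen[OF s2 assms(2)] gen2[OF assms(2)] ..
qed

context
  fixes t :: real assumes tpos: "t > 0"
begin

definition K :: "nat \<Rightarrow> nat" where "K n = nat \<lceil>t * sqrt (real n)\<rceil>"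

definition u :: "nat \<Rightarrow> real" where "u n = real (K n) / sqrt (real n)"

lemma K_bounds: "t * sqrt (real n) \<le> real (K n)" "real (K n) \<le> t * sqrt (real n) + 1"
proof -
  have "0 \<le> t * sqrt (real n)" using tpos by simp
  hence nn: "0 \<le> \<lceil>t * sqrt (real n)\<rceil>" by simp
  hence e: "real (K n) = real_of_int \<lceil>t * sqrt (real n)\<rceil>" unfolding K_def by simp
  show "t * sqrt (real n) \<le> real (K n)" unfolding e by (rule le_of_int_ceiling)
  show "real (K n) \<le> t * sqrt (real n) + 1" unfolding e by (rule of_int_ceiling_le_add_one)
qed

lemma K_pos: "1 \<le> n \<Longrightarrow> 1 \<le> K n"
proof -
  assume "1 \<le> n"
  hence "0 < t * sqrt (real n)" using tpos by simp
  hence "0 < real (K n)" using K_bounds(1)[of n] by linarith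
  thus ?thesis by simp
qed

lemma u_lim: "u \<longlonglongrightarrow> t"
proof (rule tendsto_sandwich[of "\<lambda>n. t" _ _ "\<lambda>n. t + 1 / sqrt (real n)"])
  show "\<forall>\<^sub>F n in sequentially. t \<le> u n"
    using eventually_ge_at_top[of "1::nat"]
  proof eventually_elim
    case (elim n)
    hence "sqrt (real n) > 0" by simp
    thus ?case unfolding u_def using K_bounds(1)[of n] by (simp add: field_simps)
  qed
  show "\<forall>\<^sub>F n in sequentially. u n \<le> t + 1 / sqrt (real n)"
    using eventually_ge_at_top[of "1::nat"]
  proof eventually_elim
    case (elim n)
    hence "sqrt (real n) > 0" by simp
    thus ?case unfolding u_def using K_bounds(2)[of n] by (simp add: field_simps)
  qed
  show "(\<lambda>n. t) \<longlonglongrightarrow> t" by simp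
  show "(\<lambda>n. t + 1 / sqrt (real n)) \<longlonglongrightarrow> t"
    using tendsto_add[OF tendsto_const[of t] inv_sqrt_lim] by simp
qed

lemma K_small: "\<forall>\<^sub>F n in sequentially. 3 * K n \<le> n"
proof -
  have "(\<lambda>n. 3 * (t + 1) * (1 / sqrt (real n))) \<longlonglongrightarrow> 3 * (t + 1) * 0"
    by (intro tendsto_mult tendsto_const inv_sqrt_lim)
  hence "\<forall>\<^sub>F n in sequentially. 3 * (t + 1) * (1 / sqrt (real n)) < 1"
    using order_tendstoD(2)[of _ "3 * (t + 1) * 0" sequentially "1::real"] by simp
  thus ?thesis using eventually_ge_at_top[of "1::nat"]
  proof eventually_elim
    case (elim n)
    hence s: "sqrt (real n) > 0" by simp
    hence a: "3 * (t + 1) < sqrt (real n)" using elim by (simp add: field_simps)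
    have "real (K n) \<le> t * sqrt (real n) + 1" by (rule K_bounds(2))
    also have "\<dots> \<le> (t + 1) * sqrt (real n)"
      using elim(2) by (simp add: algebra_simps)
    finally have "3 * real (K n) \<le> 3 * (t + 1) * sqrt (real n)" by linarith
    also have "\<dots> \<le> sqrt (real n) * sqrt (real n)" using a s by (intro mult_right_mono) auto
    also have "\<dots> = real n" by simp
    finally show ?case by linarith
  qed
qed

definition L1 where "L1 n = real (K n) * ((real (K n) - 1) / (real n - 1))"
definition L2 where "L2 n = real (K n) * ((real (K n) - 1) / (real n - real (K n))
   + 2 * ((real (K n) - 1) / (real n - real (K n)))\<^sup>2)"

lemma L1_lim: "L1 \<longlonglongrightarrow> t\<^sup>2"
proof -
  let ?w = "\<lambda>n::nat. 1 / sqrt (real n)"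
  have lim: "(\<lambda>n. u n * (u n - ?w n) * (real n / (real n - 1))) \<longlonglongrightarrow> t * (t - 0) * 1"
    by (intro tendsto_mult tendsto_diff u_lim inv_sqrt_lim n_frac_lim)
  have ev: "\<forall>\<^sub>F n in sequentially. u n * (u n - ?w n) * (real n / (real n - 1)) = L1 n"
    using eventually_ge_at_top[of "2::nat"]
  proof eventually_elim
    case (elim n)
    have s: "sqrt (real n) > 0" "(sqrt (real n))\<^sup>2 \<noteq> 1" using elim by auto
    have sq: "(sqrt (real n))\<^sup>2 = real n" by simp
    show ?case using alg1[OF s, of "real (K n)"] unfolding L1_def u_def sq by simp
  qed
  show ?thesis using Lim_transform_eventually[OF lim ev] by (simp add: power2_eq_square)
qed

lemma L2_lim: "L2 \<longlonglongrightarrow> t\<^sup>2"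
proof -
  let ?w = "\<lambda>n::nat. 1 / sqrt (real n)"
  have lim: "(\<lambda>n. u n * (u n - ?w n) / (1 - u n * ?w n)
      + 2 * u n * (u n - ?w n)\<^sup>2 * ?w n / (1 - u n * ?w n)\<^sup>2) \<longlonglongrightarrow>
      t * (t - 0) / (1 - t * 0) + 2 * t * (t - 0)\<^sup>2 * 0 / (1 - t * 0)\<^sup>2"
    by (intro tendsto_add tendsto_mult tendsto_divide tendsto_diff tendsto_power u_lim inv_sqrt_lim tendsto_const) simp_all
  have ev: "\<forall>\<^sub>F n in sequentially. u n * (u n - ?w n) / (1 - u n * ?w n)
      + 2 * u n * (u n - ?w n)\<^sup>2 * ?w n / (1 - u n * ?w n)\<^sup>2 = L2 n"
    using eventually_ge_at_top[of "1::nat"] K_small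
  proof eventually_elim
    case (elim n)
    have sq: "(sqrt (real n))\<^sup>2 = real n" by simp
    have s: "sqrt (real n) > 0" "(sqrt (real n))\<^sup>2 - real (K n) \<noteq> 0" using elim unfolding sq by auto
    show ?case using alg2[OF s] unfolding L2_def u_def sq by simp
  qed
  show ?thesis using Lim_transform_eventually[OF lim ev] by (simp add: power2_eq_square)
qed

lemma set_eq: assumes "1 \<le> n"
  shows "{U. t \<le> real (tau n U) / sqrt (real n)} = {U. K n \<le> tau n U}"
proof -
  have s: "sqrt (real n) > 0" using assms by simp
  { fix m :: nat
    have "t \<le> real m / sqrt (real n) \<longleftrightarrow> t * sqrt (real n) \<le> real m" using s by (simp add: pos_le_divide_eq)
    also have "\<dots> \<longleftrightarrow> \<lceil>t * sqrt (real n)\<rceil> \<le> int m" by (simp add: ceiling_le_iff)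
    also have "\<dots> \<longleftrightarrow> K n \<le> m" unfolding K_def by (simp add: nat_le_iff)
    finally have "t \<le> real m / sqrt (real n) \<longleftrightarrow> K n \<le> m" . }
  thus ?thesis by auto
qed

lemma main_lim: "(\<lambda>n. measure_pmf.prob (urn n) {U. real (tau n U) / sqrt (real n) \<ge> t}) \<longlonglongrightarrow> exp (- (t\<^sup>2))"
proof -
  have ev: "\<forall>\<^sub>F n in sequentially. R n (K n) = measure_pmf.prob (urn n) {U. real (tau n U) / sqrt (real n) \<ge> t}"
    using eventually_ge_at_top[of "2::nat"]
  proof eventually_elim
    case (elim n)
    thus ?case using set_eq[of n] tail_tau[of n "K n"] K_pos[of n] by simp
  qed
  have "(\<lambda>n. R n (K n)) \<longlonglongrightarrow> exp (- (t\<^sup>2))"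
  proof (rule tendsto_sandwich[of "\<lambda>n. exp (- L2 n)" _ _ "\<lambda>n. exp (- L1 n)"])
    show "\<forall>\<^sub>F n in sequentially. exp (- L2 n) \<le> R n (K n)"
      using eventually_ge_at_top[of "1::nat"] K_small
    proof eventually_elim
      case (elim n)
      thus ?case using R_lower[of "K n" n] K_pos[of n] unfolding L2_def by simp
    qed
    show "\<forall>\<^sub>F n in sequentially. R n (K n) \<le> exp (- L1 n)"
      using eventually_ge_at_top[of "1::nat"] K_small
    proof eventually_elim
      case (elim n)
      thus ?case using R_upper[of "K n" n] K_pos[of n] unfolding L1_def by simp
    qed
    show "(\<lambda>n. exp (- L2 n)) \<longlonglongrightarrow> exp (- (t\<^sup>2))" by (intro tendsto_exp tendsto_minus L2_lim)
    show "(\<lambda>n. exp (- L1 n)) \<longlonglongrightarrow> exp (- (t\<^sup>2))" by (intro tendsto_exp tendsto_minus L1_lim)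
  qed
  thus ?thesis using Lim_transform_eventually[OF _ ev] by blast
qed

end

theorem mainTheorem10:
  shows "(\<forall>n\<ge>2. map_pmf (tau n) (urn n) = map_pmf (tau' n) (urn n))
    \<and> (\<forall>n\<ge>2. \<forall>k\<ge>1. measure_pmf.prob (urn n) {U. tau n U \<ge> k}
          = (\<Prod>i<k. real n - real k - real i) / (\<Prod>i<k. real n - 1 - real i))
    \<and> (\<forall>t::real\<ge>0. (\<lambda>n. measure_pmf.prob (urn n) {U. real (tau n U) / sqrt (real n) \<ge> t})
          \<longlonglongrightarrow> exp (- (t\<^sup>2)))"
proof (intro conjI allI impI)
  fix n :: nat assume "2 \<le> n"
  thus "map_pmf (tau n) (urn n) = map_pmf (tau' n) (urn n)" by (rule dist_eq)
next
  fix n k :: nat assume "2 \<le> n" "1 \<le> k"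
  thus "measure_pmf.prob (urn n) {U. tau n U \<ge> k}
          = (\<Prod>i<k. real n - real k - real i) / (\<Prod>i<k. real n - 1 - real i)"
    using tail_tau unfolding R_def by simp
next
  fix t :: real assume t: "0 \<le> t"
  show "(\<lambda>n. measure_pmf.prob (urn n) {U. real (tau n U) / sqrt (real n) \<ge> t}) \<longlonglongrightarrow> exp (- (t\<^sup>2))"
  proof (cases "t = 0")
    case True
    have "\<And>n. {U. real (tau n U) / sqrt (real n) \<ge> t} = UNIV" using True by auto
    thus ?thesis using True by simp
  next
    case False
    hence "t > 0" using t by simp
    thus ?thesis by (rule main_lim)
  qed
qed

end
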